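(* For the SVIQS system, if $R_0>1$ then the disease is uniformly persistent: there exists a constant $\varepsilon>0$ such that every solution whose initial data satisfy $S_k(0),V_k(0),I_k(0),Q_k(0)\ge0$, $S_k(0)+V_k(0)+I_k(0)+Q_k(0)=N_k^*$ for all $k$, and $I(0)=\sum_{k=1}^np(k)I_k(0)>0$, satisfies $\liminf_{t\to\infty}I(t)\ge\varepsilon$, where $I(t)=\sum_{k=1}^np(k)I_k(t)$.
   Context: Fix an integer $n\ge1$ and numbers $p(1),\dots,p(n)>0$ with $\sum_{k=1}^n p(k)=1$; set $\langle k\rangle=\sum_{k=1}^n kp(k)$. Fix constants $b>d>0$ and let $\Phi^*>0$ satisfy $\Phi^*=\frac{1}{\langle k\rangle}\sum_{i=1}^n \frac{i\,p(i)\,b\Phi^*}{d+bi\Phi^*}$. For $k=1,\dots,n$ put $N_k^*=\frac{bk\Phi^*}{d+bk\Phi^*}\in(0,1)$ and $\Lambda_k=bk(1-N_k^* )\Phi^*$ (so $\Lambda_k=dN_k^*>0$). Parameters: $\lambda(k)>0$, $\varphi(k)>0$, $\mu_k>0$ for $k=1,\dots,n$; constants $\beta,\gamma,\eta,\omega>0$ and $\delta\in[0,1]$. For functions $I_1(t),\dots,I_n(t)$ set $\Theta(t)=\frac{1}{\langle k\rangle}\sum_{i=1}^n\varphi(i)p(i)I_i(t)$. The SVIQS system is, for $k=1,\dots,n$: $S_k'=\Lambda_k-\lambda(k)S_k\Theta+\gamma I_k+\eta Q_k+\omega V_k-(\mu_k+d)S_k$, $V_k'=\mu_kS_k-\delta\lambda(k)V_k\Theta-(d+\omega)V_k$,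 $I_k'=\lambda(k)S_k\Theta+\delta\lambda(k)V_k\Theta-(\gamma+\beta+d)I_k$, $Q_k'=\beta I_k-(\eta+d)Q_k$. Its basic reproduction number is $R_0=\frac{1}{\langle k\rangle}\sum_{i=1}^n\frac{\lambda(i)\varphi(i)p(i)\Lambda_i(\omega+d+\delta\mu_i)}{d(\gamma+\beta+d)(\omega+\mu_i+d)}$. *)

theory Defs
  imports "HOL-Analysis.Analysis"
begin

text \<open>Degree classes are indexed by k in {1..n}; p k is the degree distribution.\<close>

definition kmean :: "nat \<Rightarrow> (nat \<Rightarrow> real) \<Rightarrow> real" where
  "kmean n p = (\<Sum>k=1..n. real k * p k)"

definition Nstar :: "real \<Rightarrow> real \<Rightarrow> real \<Rightarrow> nat \<Rightarrow> real" where
  "Nstar b d Phi k = b * real k * Phi / (d + b * real k * Phi)"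

definition Lam :: "real \<Rightarrow> real \<Rightarrow> real \<Rightarrow> nat \<Rightarrow> real" where
  "Lam b d Phi k = b * real k * (1 - Nstar b d Phi k) * Phi"

definition Theta :: "nat \<Rightarrow> (nat \<Rightarrow> real) \<Rightarrow> (nat \<Rightarrow> real) \<Rightarrow> (nat \<Rightarrow> real \<Rightarrow> real) \<Rightarrow> real \<Rightarrow> real" where
  "Theta n p phi I t = (1 / kmean n p) * (\<Sum>i=1..n. phi i * p i * I i t)"

definition R0 :: "nat \<Rightarrow> (nat \<Rightarrow> real) \<Rightarrow> real \<Rightarrow> real \<Rightarrow> real \<Rightarrow> (nat \<Rightarrow> real) \<Rightarrow> (nat \<Rightarrow> real)
   \<Rightarrow> (nat \<Rightarrow> real) \<Rightarrow> real \<Rightarrow> real \<Rightarrow> real \<Rightarrow> real \<Rightarrow> real" where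
  "R0 n p b d Phi lam phi mu \<beta> \<gamma> \<omega> \<delta> =
     (1 / kmean n p) * (\<Sum>i=1..n. lam i * phi i * p i * Lam b d Phi i * (\<omega> + d + \<delta> * mu i)
        / (d * (\<gamma> + \<beta> + d) * (\<omega> + mu i + d)))"

definition SVIQS_solution ::
  "nat \<Rightarrow> (nat \<Rightarrow> real) \<Rightarrow> real \<Rightarrow> real \<Rightarrow> real \<Rightarrow> (nat \<Rightarrow> real) \<Rightarrow> (nat \<Rightarrow> real) \<Rightarrow> (nat \<Rightarrow> real)
   \<Rightarrow> real \<Rightarrow> real \<Rightarrow> real \<Rightarrow> real \<Rightarrow> real
   \<Rightarrow> (nat \<Rightarrow> real \<Rightarrow> real) \<Rightarrow> (nat \<Rightarrow> real \<Rightarrow> real) \<Rightarrow> (nat \<Rightarrow> real \<Rightarrow> real) \<Rightarrow> (nat \<Rightarrow> real \<Rightarrow> real) \<Rightarrow> bool"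
where
  "SVIQS_solution n p b d Phi lam phi mu \<beta> \<gamma> \<eta> \<omega> \<delta> S V I Q \<longleftrightarrow>
    (\<forall>k\<in>{1..n}. \<forall>t\<ge>0.
      (S k has_real_derivative
         (Lam b d Phi k - lam k * S k t * Theta n p phi I t + \<gamma> * I k t + \<eta> * Q k t + \<omega> * V k t
          - (mu k + d) * S k t)) (at t within {0..}) \<and>
      (V k has_real_derivative
         (mu k * S k t - \<delta> * lam k * V k t * Theta n p phi I t - (d + \<omega>) * V k t)) (at t within {0..}) \<and>
      (I k has_real_derivative
         (lam k * S k t * Theta n p phi I t + \<delta> * lam k * V k t * Theta n p phi I t
          - (\<gamma> + \<beta> + d) * I k t)) (at t within {0..}) \<and>
      (Q k has_real_derivative (\<beta> * I k t - (\<eta> + d) * Q k t)) (at t within {0..}))"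

end

theory Submission
  imports Defs
begin



lemma cont_from_deriv:
  assumes "\<And>t. t \<ge> 0 \<Longrightarrow> (f has_real_derivative f' t) (at t within {0..})"
  shows "continuous_on {0..} f"
  unfolding continuous_on_eq_continuous_within
  using assms DERIV_continuous by blast

lemma at_pos_deriv:
  assumes "(f has_real_derivative D) (at t within {0..})" "t > 0"
  shows "(f has_real_derivative D) (at t)"
proof -
  have "t \<in> interior {0..}" using assms(2) by simp
  then show ?thesis using assms(1) at_within_interior by metis
qed

lemma mono_deriv:
  assumes d: "\<And>t. t \<ge> 0 \<Longrightarrow> (f has_real_derivative f' t) (at t within {0..})"
   and "0 \<le> a" "a \<le> b" and nn: "\<And>t. a < t \<Longrightarrow> t < b \<Longrightarrow> f' t \<ge> 0"
  shows "f a \<le> f b"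
proof (rule DERIV_nonneg_imp_increasing_open[OF assms(3)])
  fix x assume x: "a < x" "x < b"
  then show "\<exists>y. (f has_real_derivative y) (at x) \<and> 0 \<le> y"
    using at_pos_deriv[OF d] nn assms(2) by (metis less_eq_real_def order_le_less_trans)
next
  show "continuous_on {a..b} f"
    using continuous_on_subset[OF cont_from_deriv[OF d]] assms(2) by auto
qed

lemma pos_invariant:
  fixes x :: "'j \<Rightarrow> real \<Rightarrow> real" and J :: "'j set"
  assumes fin: "finite J"
  and der: "\<And>j t. j \<in> J \<Longrightarrow> t \<ge> 0 \<Longrightarrow> (x j has_real_derivative x' j t) (at t within {0..})"
  and init: "\<And>j. j \<in> J \<Longrightarrow> x j 0 \<ge> 0"
  and bnd: "\<And>t e j. 0 \<le> t \<Longrightarrow> t \<le> t1 \<Longrightarrow> 0 < e \<Longrightarrow> e \<le> e0 \<Longrightarrow> (\<forall>i\<in>J. x i t \<ge> -e)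
             \<Longrightarrow> j \<in> J \<Longrightarrow> x j t = -e \<Longrightarrow> x' j t \<ge> - M * e"
  and e0: "e0 > 0" and t1: "t1 \<ge> 0" and jJ: "j \<in> J"
  shows "x j t1 \<ge> 0"
proof (rule ccontr)
  assume neg: "\<not> x j t1 \<ge> 0"
  define K where "K = \<bar>M\<bar> + 1"
  have K: "K > 0" "K > M" unfolding K_def by auto
  define E where "E = exp (K * t1)"
  have E: "E > 0" unfolding E_def by simp
  define \<epsilon> where "\<epsilon> = min (e0 / E) (- x j t1 / E) / 2"
  have \<epsilon>: "\<epsilon> > 0" "\<epsilon> * E \<le> e0" "\<epsilon> * E < - x j t1"
    using E e0 neg unfolding \<epsilon>_def by (auto simp: field_simps min_def)
  define y where "y i t = x i t + \<epsilon> * exp (K * t)" for i t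
  have ycont: "continuous_on {0..} (y i)" if "i \<in> J" for i
    unfolding y_def
    by (intro continuous_intros cont_from_deriv[OF der[OF that]])
  have yder: "(y i has_real_derivative (x' i t + \<epsilon> * (K * exp (K * t)))) (at t within {0..})"
    if "i \<in> J" "t \<ge> 0" for i t
    unfolding y_def using der[OF that]
    by (auto intro!: derivative_eq_intros)
  define Z where "Z = (\<Union>i\<in>J. {0..t1} \<inter> y i -` {..0})"
  have "closed Z" unfolding Z_def
    using fin
  proof (intro closed_UN ballI)
    fix i assume "i \<in> J"
    have "continuous_on {0..t1} (y i)" using ycont[OF \<open>i\<in>J\<close>] by (rule continuous_on_subset) auto
    then show "closed ({0..t1} \<inter> y i -` {..0})"
      by (rule continuous_closed_preimage) auto
  qed auto
  have yt1: "y j t1 < 0" unfolding y_def using \<epsilon> E_def by simp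
  have "t1 \<in> {0..t1} \<inter> y j -` {..0}" using yt1 t1 by simp
  then have "t1 \<in> Z" unfolding Z_def using jJ by blast
  then have "Z \<noteq> {}" by auto
  have "bdd_below Z" unfolding Z_def by (auto intro: bdd_belowI[where m=0])
  define \<tau> where "\<tau> = Inf Z"
  have \<tau>Z: "\<tau> \<in> Z" unfolding \<tau>_def
    using closed_contains_Inf[OF \<open>Z \<noteq> {}\<close> \<open>bdd_below Z\<close> \<open>closed Z\<close>] .
  have \<tau>le: "\<tau> \<le> s" if "s \<in> Z" for s
    unfolding \<tau>_def using that \<open>bdd_below Z\<close> by (simp add: cInf_lower)
  obtain i0 where i0: "i0 \<in> J" "y i0 \<tau> \<le> 0" "0 \<le> \<tau>" "\<tau> \<le> t1" using \<tau>Z unfolding Z_def by auto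
  have y0: "y i 0 > 0" if "i \<in> J" for i unfolding y_def using init[OF that] \<epsilon> by simp
  have \<tau>pos: "\<tau> > 0" using i0 y0[OF i0(1)] by (cases "\<tau> = 0") auto
  have ynn: "y i \<tau> \<ge> 0" if iJ: "i \<in> J" for i
  proof (rule ccontr)
    assume "\<not> y i \<tau> \<ge> 0"
    have "continuous_on {0..\<tau>} (\<lambda>t. - y i t)"
      using ycont[OF iJ] by (intro continuous_intros) (rule continuous_on_subset, auto)
    then obtain s where s: "0 \<le> s" "s \<le> \<tau>" "- y i s = 0"
      using IVT'[of "\<lambda>t. - y i t" 0 0 \<tau>] y0[OF iJ] \<open>\<not> y i \<tau> \<ge> 0\<close> \<tau>pos by force
    then have "s \<noteq> \<tau>" using \<open>\<not> y i \<tau> \<ge> 0\<close> by auto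
    have "y i s \<le> 0" using s by simp
    moreover have "0 \<le> s" "s \<le> t1" using s i0 by auto
    ultimately have "s \<in> {0..t1} \<inter> y i -` {..0}" by simp
    then have "s \<in> Z" unfolding Z_def using iJ by blast
    then have "\<tau> \<le> s" by (rule \<tau>le)
    then show False using s \<open>s \<noteq> \<tau>\<close> by simp
  qed
  have yi0: "y i0 \<tau> = 0" using ynn[OF i0(1)] i0 by simp
  define e where "e = \<epsilon> * exp (K * \<tau>)"
  have epos: "e > 0" unfolding e_def using \<epsilon> by simp
  have "exp (K * \<tau>) \<le> E" unfolding E_def using K i0 by simp
  then have ele: "e \<le> e0" unfolding e_def using \<epsilon> 
    by (meson less_eq_real_def mult_left_mono order_trans)
  have "\<forall>i\<in>J. x i \<tau> \<ge> -e"
  proof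
    fix i assume "i \<in> J"
    from ynn[OF this] show "x i \<tau> \<ge> -e" by (simp add: y_def e_def)
  qed
  moreover have "x i0 \<tau> = -e" using yi0 unfolding y_def e_def by simp
  ultimately have "x' i0 \<tau> \<ge> - M * e" using bnd[OF i0(3,4) epos ele _ i0(1)] by blast
  then have Dpos: "x' i0 \<tau> + \<epsilon> * (K * exp (K * \<tau>)) > 0"
  proof -
    have "\<epsilon> * (K * exp (K*\<tau>)) = K * e" by (simp add: e_def)
    moreover have "(K - M) * e > 0" using K epos by simp
    moreover have "(K - M) * e = K * e + - M * e" by (simp add: algebra_simps)
    ultimately show ?thesis using \<open>x' i0 \<tau> \<ge> - M * e\<close> by linarith
  qed
  have "(y i0 has_real_derivative (x' i0 \<tau> + \<epsilon> * (K * exp (K * \<tau>)))) (at \<tau>)"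
    using at_pos_deriv[OF yder[OF i0(1) i0(3)] \<tau>pos] .
  from DERIV_pos_inc_left[OF this Dpos] obtain dd where dd: "dd > 0"
    "\<And>h. h > 0 \<Longrightarrow> h < dd \<Longrightarrow> y i0 (\<tau> - h) < y i0 \<tau>" by blast
  define h where "h = min (dd / 2) \<tau>"
  have h: "h > 0" "h < dd" "h \<le> \<tau>" unfolding h_def using dd \<tau>pos by auto
  have "y i0 (\<tau> - h) \<le> 0" using dd(2)[OF h(1,2)] yi0 by simp
  moreover have "0 \<le> \<tau> - h" "\<tau> - h \<le> t1" using h i0 by auto
  ultimately have "\<tau> - h \<in> {0..t1} \<inter> y i0 -` {..0}" by simp
  then have "\<tau> - h \<in> Z" unfolding Z_def using i0(1) by blast
  then have "\<tau> \<le> \<tau> - h" by (rule \<tau>le)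
  then show False using h by simp
qed

lemma prod_lb: fixes x y :: real
  assumes "-u \<le> x" "x \<le> xm" "-v \<le> y" "y \<le> ym" "0 \<le> u" "0 \<le> v" "0 \<le> xm" "0 \<le> ym"
  shows "x * y \<ge> - (u * ym + xm * v)"
proof -
  have uy: "u * ym \<ge> 0" "xm * v \<ge> 0" using assms by auto
  show ?thesis
proof (cases "x \<ge> 0")
  case True
  then show ?thesis proof (cases "y \<ge> 0")
    case False
    have "x * y \<ge> xm * y" using True False assms by (simp add: mult_right_mono_neg)
    moreover have "xm * y \<ge> xm * (-v)" using assms mult_left_mono[of "-v" y xm] by simp
    ultimately show ?thesis using uy by linarith
  next
    case yy: True
    have "x * y \<ge> 0" using True yy by simp
    then show ?thesis using uy by linarith
  qed
next
  case False
  then show ?thesis proof (cases "y \<ge> 0")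
    case True
    have "x * y \<ge> x * ym" using True False assms by (simp add: mult_left_mono_neg)
    moreover have "x * ym \<ge> (-u) * ym" using assms mult_right_mono[of "-u" x ym] by simp
    ultimately show ?thesis using uy by linarith
  next
    case f2: False
    have "x * y \<ge> 0" using False f2 by (simp add: mult_nonpos_nonpos)
    then show ?thesis using uy by linarith
  qed
qed
qed

lemma eth_lb: fixes e th c :: real
  assumes "0 \<le> e" "e \<le> 1" "- c * e \<le> th" "0 \<le> c"
  shows "e * th \<ge> - c * e"
proof -
  have "e * th \<ge> e * (- c * e)" using assms mult_left_mono by blast
  moreover have "c * (e * e) \<le> c * e" using assms mult_left_mono[of "e*e" e c]
    by (simp add: mult_left_le_one_le)
  ultimately show ?thesis by (simp add: algebra_simps)
qed
lemma bnd_cont: fixes g :: "real \<Rightarrow> real"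
  assumes "continuous_on {0..t1} g"
  shows "\<exists>B. \<forall>u\<in>{0..t1}. \<bar>g u\<bar> \<le> B"
proof -
  have "compact (g ` {0..t1})" using compact_continuous_image[OF assms] by simp
  then have "bounded (g ` {0..t1})" by (rule compact_imp_bounded)
  then show ?thesis unfolding bounded_iff by auto
qed

locale svp =
  fixes n :: nat and p lam phi mu :: "nat \<Rightarrow> real" and b d Phi \<beta> \<gamma> \<eta> \<omega> \<delta> :: real
  assumes n: "n \<ge> 1"
    and p_pos: "\<forall>k\<in>{1..n}. p k > 0"
    and bd: "b > d" "d > 0"
    and Phi_pos: "Phi > 0"
    and lam_pos: "\<forall>k\<in>{1..n}. lam k > 0"
    and phi_pos: "\<forall>k\<in>{1..n}. phi k > 0"
    and mu_pos: "\<forall>k\<in>{1..n}. mu k > 0"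
    and pars: "\<beta> > 0" "\<gamma> > 0" "\<eta> > 0" "\<omega> > 0"
    and delta: "0 \<le> \<delta>" "\<delta> \<le> 1"
    and R0: "R0 n p b d Phi lam phi mu \<beta> \<gamma> \<omega> \<delta> > 1"
begin

definition "kb = kmean n p"
definition "Nk k = Nstar b d Phi k"
definition "Lk k = Lam b d Phi k"
definition "aa = \<gamma> + \<beta> + d"
definition "c1 k = (d + \<omega> + mu k * \<delta>) / (d * (mu k + \<omega> + d))"
definition "c2 k = (\<delta> * (mu k + d) + \<omega>) / (d * (mu k + \<omega> + d))"
definition "w k = lam k * phi k * p k / kb"
definition "AA = (\<Sum>k=1..n. w k * c1 k * Lk k) - aa"
definition "C1 = (\<Sum>k=1..n. w k * lam k * (c1 k + c2 k) * Nk k)"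
definition "thr = AA / (2 * (C1 + 1))"
definition "Tm = (\<Sum>k=1..n. phi k * p k * Nk k) / kb"
definition "Cp = (\<Sum>k=1..n. w k * (c1 k + c2 k) * Nk k)"
definition "TT = 2 * Cp / AA + 1"
definition "eps0 = thr * exp (-(C1 * Tm * TT + Cp))"
definition "Fs = (\<Sum>k=1..n. phi k)"
definition "eps = kb * eps0 / Fs"

lemma kb_pos: "kb > 0"
proof -
  have "0 < (\<Sum>k=1..n. real k * p k)"
    using n p_pos by (intro sum_pos) auto
  then show ?thesis unfolding kb_def kmean_def .
qed

lemma Nk_pos: "k \<in> {1..n} \<Longrightarrow> Nk k > 0"
  unfolding Nk_def Nstar_def using bd Phi_pos by (auto intro!: divide_pos_pos mult_pos_pos add_pos_pos)

lemma Lk_eq: "k \<in> {1..n} \<Longrightarrow> Lk k = d * Nk k"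
proof -
  assume k: "k \<in> {1..n}"
  have pos: "d + b * real k * Phi > 0" using k bd Phi_pos by (auto intro!: add_pos_pos mult_pos_pos)
  show ?thesis unfolding Lk_def Nk_def Lam_def Nstar_def using pos
    by (simp add: field_simps)
qed

lemma Dpos: "k \<in> {1..n} \<Longrightarrow> d * (mu k + \<omega> + d) > 0"
  using bd mu_pos pars by (auto intro!: mult_pos_pos add_pos_pos)

lemma c1_pos: "k \<in> {1..n} \<Longrightarrow> c1 k > 0"
  unfolding c1_def using Dpos[of k] bd pars mu_pos[rule_format, of k] delta
  by (intro divide_pos_pos) (auto intro!: add_pos_nonneg mult_nonneg_nonneg)

lemma c2_nn: "k \<in> {1..n} \<Longrightarrow> c2 k \<ge> 0"
  unfolding c2_def using Dpos[of k] bd pars mu_pos[rule_format, of k] delta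
  by (intro divide_nonneg_pos) (auto intro!: add_nonneg_nonneg mult_nonneg_nonneg)

lemma e1: "k \<in> {1..n} \<Longrightarrow> c1 k * (mu k + d) = 1 + c2 k * mu k"
  using Dpos[of k] unfolding c1_def c2_def by (simp add: field_simps)

lemma e2: "k \<in> {1..n} \<Longrightarrow> c2 k * (d + \<omega>) = \<delta> + c1 k * \<omega>"
  using Dpos[of k] unfolding c1_def c2_def by (simp add: field_simps)

lemma w_pos: "k \<in> {1..n} \<Longrightarrow> w k > 0"
  unfolding w_def using kb_pos lam_pos phi_pos p_pos by auto

lemma aa_pos: "aa > 0" unfolding aa_def using pars bd by simp

lemma AA_pos: "AA > 0"
proof -
  have "(\<Sum>k=1..n. w k * c1 k * Lk k) = aa * R0 n p b d Phi lam phi mu \<beta> \<gamma> \<omega> \<delta>"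
    unfolding R0_def sum_distrib_left kb_def[symmetric]
  proof (intro sum.cong refl)
    fix k assume k: "k \<in> {1..n}"
    show "w k * c1 k * Lk k = aa * (1 / kb * (lam k * phi k * p k * Lam b d Phi k * (\<omega> + d + \<delta> * mu k) /
           (d * (\<gamma> + \<beta> + d) * (\<omega> + mu k + d))))"
    proof -
      have aux: "\<And>L c Y M aa. d \<noteq> 0 \<Longrightarrow> aa \<noteq> 0 \<Longrightarrow> kb \<noteq> 0 \<Longrightarrow> Y \<noteq> 0 \<Longrightarrow>
          (L / kb) * (c / (d * Y)) * M = aa * (1 / kb * (L * M * c / (d * aa * Y)))"
        by (simp add: field_simps)
      have Y: "\<omega> + mu k + d \<noteq> 0" using Dpos[OF k] by (auto simp: add.commute add.left_commute)
      have r1: "d + \<omega> + mu k * \<delta> = \<omega> + d + \<delta> * mu k" by simp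
      have r2: "mu k + \<omega> + d = \<omega> + mu k + d" by simp
      show ?thesis
        unfolding w_def c1_def Lk_def r1 r2 aa_def
        by (rule aux) (use bd aa_pos[unfolded aa_def] kb_pos Y in auto)
    qed
  qed
  then show ?thesis unfolding AA_def using R0 aa_pos by simp
qed

lemma C1_nn: "C1 \<ge> 0"
  unfolding C1_def using less_imp_le[OF w_pos] less_imp_le[OF lam_pos[rule_format]] less_imp_le[OF c1_pos] c2_nn less_imp_le[OF Nk_pos]
  by (intro sum_nonneg) (auto intro!: mult_nonneg_nonneg add_nonneg_nonneg)

lemma Cp_nn: "Cp \<ge> 0"
  unfolding Cp_def using less_imp_le[OF w_pos] less_imp_le[OF c1_pos] c2_nn less_imp_le[OF Nk_pos]
  by (intro sum_nonneg) (auto intro!: mult_nonneg_nonneg add_nonneg_nonneg)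

lemma Tm_nn: "Tm \<ge> 0"
  unfolding Tm_def using phi_pos p_pos Nk_pos kb_pos
  by (intro divide_nonneg_pos sum_nonneg) (auto intro!: mult_nonneg_nonneg less_imp_le)

lemma thr_pos: "thr > 0" unfolding thr_def using AA_pos C1_nn by simp
lemma TT_pos: "TT > 0"
proof -
  have "2 * Cp / AA \<ge> 0" using AA_pos Cp_nn by simp
  then show ?thesis unfolding TT_def by simp
qed
lemma eps0_pos: "eps0 > 0" unfolding eps0_def using thr_pos by simp
lemma Fs_pos: "Fs > 0" unfolding Fs_def using n phi_pos by (intro sum_pos) auto
lemma eps_pos: "eps > 0" unfolding eps_def using kb_pos eps0_pos Fs_pos by simp

end


locale svs = svp +
  fixes S V I Q :: "nat \<Rightarrow> real \<Rightarrow> real"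
  assumes sol: "SVIQS_solution n p b d Phi lam phi mu \<beta> \<gamma> \<eta> \<omega> \<delta> S V I Q"
   and init: "\<forall>k\<in>{1..n}. S k 0 \<ge> 0 \<and> V k 0 \<ge> 0 \<and> I k 0 \<ge> 0 \<and> Q k 0 \<ge> 0 \<and>
               S k 0 + V k 0 + I k 0 + Q k 0 = Nstar b d Phi k"
   and I0: "(\<Sum>k=1..n. p k * I k 0) > 0"
begin

abbreviation "Th t \<equiv> Theta n p phi I t"

lemma dS: "k \<in> {1..n} \<Longrightarrow> t \<ge> 0 \<Longrightarrow> (S k has_real_derivative
   (Lk k - lam k * S k t * Th t + \<gamma> * I k t + \<eta> * Q k t + \<omega> * V k t - (mu k + d) * S k t)) (at t within {0..})"
  using sol unfolding SVIQS_solution_def Lk_def by blast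
lemma dV: "k \<in> {1..n} \<Longrightarrow> t \<ge> 0 \<Longrightarrow> (V k has_real_derivative
   (mu k * S k t - \<delta> * lam k * V k t * Th t - (d + \<omega>) * V k t)) (at t within {0..})"
  using sol unfolding SVIQS_solution_def by blast
lemma dI: "k \<in> {1..n} \<Longrightarrow> t \<ge> 0 \<Longrightarrow> (I k has_real_derivative
   (lam k * S k t * Th t + \<delta> * lam k * V k t * Th t - aa * I k t)) (at t within {0..})"
  using sol unfolding SVIQS_solution_def aa_def by blast
lemma dQ: "k \<in> {1..n} \<Longrightarrow> t \<ge> 0 \<Longrightarrow> (Q k has_real_derivative
   (\<beta> * I k t - (\<eta> + d) * Q k t)) (at t within {0..})"
  using sol unfolding SVIQS_solution_def by blast

lemma cS: "k \<in> {1..n} \<Longrightarrow> continuous_on {0..} (S k)" using cont_from_deriv[OF dS] by blast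
lemma cV: "k \<in> {1..n} \<Longrightarrow> continuous_on {0..} (V k)" using cont_from_deriv[OF dV] by blast
lemma cI: "k \<in> {1..n} \<Longrightarrow> continuous_on {0..} (I k)" using cont_from_deriv[OF dI] by blast
lemma cQ: "k \<in> {1..n} \<Longrightarrow> continuous_on {0..} (Q k)" using cont_from_deriv[OF dQ] by blast

definition "Ct = (\<Sum>i=1..n. phi i * p i) / kb"
definition "Lmax = (\<Sum>i=1..n. lam i)"
definition "Mmax = (\<Sum>i=1..n. mu i)"

lemma Ct_nn: "Ct \<ge> 0" unfolding Ct_def using kb_pos phi_pos p_pos
  by (intro divide_nonneg_pos sum_nonneg) (auto intro!: mult_nonneg_nonneg less_imp_le)
lemma lam_nn: assumes "k \<in> {1..n}" shows "lam k \<ge> 0" using lam_pos[rule_format, OF assms] by simp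
lemma mu_nn: assumes "k \<in> {1..n}" shows "mu k \<ge> 0" using mu_pos[rule_format, OF assms] by simp
lemma lam_le: "k \<in> {1..n} \<Longrightarrow> lam k \<le> Lmax" unfolding Lmax_def
  using lam_nn by (intro member_le_sum) auto
lemma mu_le: "k \<in> {1..n} \<Longrightarrow> mu k \<le> Mmax" unfolding Mmax_def
  using mu_nn by (intro member_le_sum) auto

lemma Th_lb: assumes "\<forall>k\<in>{1..n}. I k u \<ge> -e" shows "Th u \<ge> - Ct * e"
proof -
  have "(\<Sum>i=1..n. phi i * p i * I i u) \<ge> (\<Sum>i=1..n. phi i * p i * (-e))"
    using assms phi_pos p_pos by (intro sum_mono mult_left_mono) (auto intro!: mult_nonneg_nonneg less_imp_le)
  also have "(\<Sum>i=1..n. phi i * p i * (-e)) = - (\<Sum>i=1..n. phi i * p i) * e"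
    by (simp add: sum_distrib_right sum_negf)
  finally show ?thesis unfolding Theta_def Ct_def kb_def[symmetric] using kb_pos
    by (simp add: field_simps)
qed

lemma Th_ub: assumes "\<forall>k\<in>{1..n}. I k u \<le> B" shows "Th u \<le> Ct * B"
proof -
  have "(\<Sum>i=1..n. phi i * p i * I i u) \<le> (\<Sum>i=1..n. phi i * p i * B)"
    using assms phi_pos p_pos by (intro sum_mono mult_left_mono) (auto intro!: mult_nonneg_nonneg less_imp_le)
  also have "(\<Sum>i=1..n. phi i * p i * B) = (\<Sum>i=1..n. phi i * p i) * B"
    by (simp add: sum_distrib_right sum_negf)
  finally show ?thesis unfolding Theta_def Ct_def kb_def[symmetric] using kb_pos
    by (simp add: field_simps)
qed


lemma cz_lb: fixes c z e :: real shows "0 \<le> c \<Longrightarrow> -e \<le> z \<Longrightarrow> c * z \<ge> -(c*e)"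
  using mult_left_mono[of "-e" z c] by simp

lemma nonneg: assumes t1: "t1 \<ge> 0" and k: "k \<in> {1..n}"
  shows "S k t1 \<ge> 0 \<and> V k t1 \<ge> 0 \<and> I k t1 \<ge> 0 \<and> Q k t1 \<ge> 0"
proof -
  define g where "g u = (\<Sum>i=1..n. \<bar>S i u\<bar> + \<bar>V i u\<bar> + \<bar>I i u\<bar>)" for u
  have cs: "continuous_on {0..t1} (S i)" "continuous_on {0..t1} (V i)" "continuous_on {0..t1} (I i)"
    if "i \<in> {1..n}" for i
    using continuous_on_subset[OF cS[OF that]] continuous_on_subset[OF cV[OF that]]
      continuous_on_subset[OF cI[OF that]] by auto
  have "continuous_on {0..t1} g" unfolding g_def
    by (intro continuous_intros) (use cs in auto)
  then obtain B where B: "\<forall>u\<in>{0..t1}. \<bar>g u\<bar> \<le> B" using bnd_cont by blast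
  have absle: "\<bar>S i u\<bar> \<le> B \<and> \<bar>V i u\<bar> \<le> B \<and> \<bar>I i u\<bar> \<le> B" if u: "u \<in> {0..t1}" and i: "i \<in> {1..n}" for u i
  proof -
    have "\<bar>S i u\<bar> + \<bar>V i u\<bar> + \<bar>I i u\<bar> \<le> g u" unfolding g_def
      using i by (intro member_le_sum) auto
    also have "\<dots> \<le> B" using B u by fastforce
    finally show ?thesis using abs_ge_zero[of "S i u"] abs_ge_zero[of "V i u"] abs_ge_zero[of "I i u"] by linarith
  qed
  have B0: "B \<ge> 0"
  proof -
    have "\<bar>g 0\<bar> \<le> B" using B t1 by simp
    then show ?thesis using abs_ge_zero order_trans by blast
  qed
  have Lmax_nn: "Lmax \<ge> 0" unfolding Lmax_def using lam_nn by (intro sum_nonneg) auto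
  have Mmax_nn: "Mmax \<ge> 0" unfolding Mmax_def using mu_nn by (intro sum_nonneg) auto
  have LC0: "Lmax * Ct \<ge> 0" "4 * Lmax * Ct * B \<ge> 0" using Lmax_nn Ct_nn B0 by simp_all
  define M where "M = Lmax*Ct + \<gamma> + \<eta> + \<omega> + Mmax + Lmax*Ct + 4*Lmax*Ct*B + \<beta>"
  define J where "J = {0..3::nat} \<times> {1..n}"
  define x :: "nat \<times> nat \<Rightarrow> real \<Rightarrow> real" where "x ci u = (if fst ci = 0 then S (snd ci) u else if fst ci = 1 then V (snd ci) u
      else if fst ci = 2 then I (snd ci) u else Q (snd ci) u)" for ci u
  define x' :: "nat \<times> nat \<Rightarrow> real \<Rightarrow> real" where "x' ci u = (if fst ci = 0 then
       (Lk (snd ci) - lam (snd ci) * S (snd ci) u * Th u + \<gamma> * I (snd ci) u + \<eta> * Q (snd ci) u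
          + \<omega> * V (snd ci) u - (mu (snd ci) + d) * S (snd ci) u)
     else if fst ci = 1 then (mu (snd ci) * S (snd ci) u - \<delta> * lam (snd ci) * V (snd ci) u * Th u - (d + \<omega>) * V (snd ci) u)
     else if fst ci = 2 then (lam (snd ci) * S (snd ci) u * Th u + \<delta> * lam (snd ci) * V (snd ci) u * Th u - aa * I (snd ci) u)
     else (\<beta> * I (snd ci) u - (\<eta> + d) * Q (snd ci) u))" for ci u
  have fin: "finite J" unfolding J_def by simp
  have der: "(x j has_real_derivative x' j u) (at u within {0..})" if j: "j \<in> J" and u: "u \<ge> 0" for j u
  proof -
    obtain c i where ci: "j = (c,i)" "c \<le> 3" "i \<in> {1..n}" using j unfolding J_def by auto
    consider "c = 0" | "c = 1" | "c = 2" | "c = 3" using ci by linarith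
    then show ?thesis
    proof cases
      case 1 then show ?thesis using dS[OF ci(3) u] unfolding ci x_def x'_def by simp
    next
      case 2 then show ?thesis using dV[OF ci(3) u] unfolding ci x_def x'_def by simp
    next
      case 3 then show ?thesis using dI[OF ci(3) u] unfolding ci x_def x'_def by simp
    next
      case 4 then show ?thesis using dQ[OF ci(3) u] unfolding ci x_def x'_def by simp
    qed
  qed
  have ini: "x j 0 \<ge> 0" if j: "j \<in> J" for j
  proof -
    obtain c i where ci: "j = (c,i)" "i \<in> {1..n}" using j unfolding J_def by auto
    have "S i 0 \<ge> 0 \<and> V i 0 \<ge> 0 \<and> I i 0 \<ge> 0 \<and> Q i 0 \<ge> 0" using init[rule_format, OF ci(2)] by blast
    then show ?thesis unfolding ci x_def by simp
  qed
  have bnd: "x' j u \<ge> - M * e"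
    if u0: "0 \<le> u" and u1: "u \<le> t1" and e0: "0 < e" and e1: "e \<le> 1"
      and all: "\<forall>i\<in>J. x i u \<ge> -e" and j: "j \<in> J" and xj: "x j u = -e" for u e j
  proof -
    have lo: "S i u \<ge> -e \<and> V i u \<ge> -e \<and> I i u \<ge> -e \<and> Q i u \<ge> -e" if i: "i \<in> {1..n}" for i
    proof -
      have "(0,i) \<in> J" "(1,i) \<in> J" "(2,i) \<in> J" "(3,i) \<in> J" using i unfolding J_def by auto
      then have "x (0,i) u \<ge> -e" "x (1,i) u \<ge> -e" "x (2,i) u \<ge> -e" "x (3,i) u \<ge> -e"
        using all by blast+
      then show ?thesis unfolding x_def by simp
    qed
    have uu: "u \<in> {0..t1}" using u0 u1 by simp
    have Thl: "Th u \<ge> - Ct * e" using lo by (intro Th_lb) auto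
    have Thu: "Th u \<le> Ct * B"
      using absle[OF uu] by (intro Th_ub) (auto simp: abs_le_iff)
    have eTh: "e * Th u \<ge> - Ct * e" using eth_lb[OF less_imp_le[OF e0] e1 Thl Ct_nn] .
    obtain c i where ci: "j = (c,i)" "c \<le> 3" "i \<in> {1..n}" using j unfolding J_def by auto
    note loi = lo[OF ci(3)]
    have lamle: "lam i * Ct \<le> Lmax * Ct" using lam_le[OF ci(3)] Ct_nn by (rule mult_right_mono)
    have lami: "lam i \<ge> 0" using lam_nn[OF ci(3)] .
    have Ct4: "4 * lam i * Ct * B \<le> 4 * Lmax * Ct * B"
      using lam_le[OF ci(3)] Ct_nn B0 by (simp add: mult_right_mono mult_left_mono)
    have cfin: "coef * e \<le> M * e" if "coef \<le> M" for coef
      using that e0 by (simp add: mult_right_mono)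
    consider "c = 0" | "c = 1" | "c = 2" | "c = 3" using ci by linarith
    then show ?thesis
    proof cases
      case 1
      have Si: "S i u = -e" using xj unfolding ci x_def 1 by simp
      have "x' j u = Lk i + lam i * (e * Th u) + \<gamma> * I i u + \<eta> * Q i u + \<omega> * V i u + (mu i + d) * e"
        unfolding ci x'_def 1 using Si by (simp add: algebra_simps)
      moreover have "Lk i \<ge> 0" using Lk_eq[OF ci(3)] Nk_pos[OF ci(3)] bd by simp
      moreover have "lam i * (e * Th u) \<ge> - (lam i * (Ct * e))" using cz_lb[OF lami] eTh by simp
      moreover have "\<gamma> * I i u \<ge> -(\<gamma> * e)" using cz_lb[of \<gamma> e "I i u"] pars loi by simp
      moreover have "\<eta> * Q i u \<ge> -(\<eta> * e)" using cz_lb[of \<eta> e "Q i u"] pars loi by simp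
      moreover have "\<omega> * V i u \<ge> -(\<omega> * e)" using cz_lb[of \<omega> e "V i u"] pars loi by simp
      moreover have "(mu i + d) * e \<ge> 0" using mu_nn[OF ci(3)] bd e0 by simp
      moreover have "(lam i * Ct + \<gamma> + \<eta> + \<omega>) * e \<le> M * e"
        by (rule cfin) (use lamle Lmax_nn Ct_nn Mmax_nn B0 pars Ct4 lami LC0 in \<open>unfold M_def, linarith\<close>)
      ultimately show ?thesis by (simp add: algebra_simps)
    next
      case 2
      have Vi: "V i u = -e" using xj unfolding ci x_def 2 by simp
      have "x' j u = mu i * S i u + \<delta> * (lam i * (e * Th u)) + (d + \<omega>) * e"
        unfolding ci x'_def 2 using Vi by (simp add: algebra_simps)
      moreover have "mu i * S i u \<ge> -(mu i * e)" using cz_lb[OF mu_nn[OF ci(3)]] loi by simp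
      moreover have "lam i * (e * Th u) \<ge> - (lam i * (Ct * e))" using cz_lb[OF lami] eTh by simp
      moreover have "\<delta> * (lam i * (e * Th u)) \<ge> - (lam i * (Ct * e))"
      proof -
        have "\<delta> * (lam i * (e * Th u)) \<ge> -(\<delta> * (lam i * (Ct * e)))"
          using cz_lb[OF delta(1) \<open>lam i * (e * Th u) \<ge> - (lam i * (Ct * e))\<close>] by simp
        moreover have "\<delta> * (lam i * (Ct * e)) \<le> lam i * (Ct * e)"
          using delta lami Ct_nn e0 by (simp add: mult_left_le_one_le)
        ultimately show ?thesis by simp
      qed
      moreover have "(d + \<omega>) * e \<ge> 0" using bd pars e0 by simp
      moreover have "(mu i + lam i * Ct) * e \<le> M * e"
        by (rule cfin) (use lamle Lmax_nn Ct_nn Mmax_nn B0 pars Ct4 lami mu_le[OF ci(3)] LC0 in \<open>unfold M_def, linarith\<close>)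
      ultimately show ?thesis by (simp add: algebra_simps)
    next
      case 3
      have Ii: "I i u = -e" using xj unfolding ci x_def 3 by simp
      have "x' j u = lam i * (Th u * (S i u + \<delta> * V i u)) + aa * e"
        unfolding ci x'_def 3 using Ii by (simp add: algebra_simps)
      moreover have "Th u * (S i u + \<delta> * V i u) \<ge> - ((Ct * e) * (2 * B) + (Ct * B) * (2 * e))"
      proof (rule prod_lb)
        show "- (Ct * e) \<le> Th u" using Thl by simp
        show "Th u \<le> Ct * B" by (rule Thu)
        have dV1: "\<delta> * V i u \<ge> -e"
        proof (cases "V i u \<ge> 0")
          case True
          then have "\<delta> * V i u \<ge> 0" using delta by simp
          then show ?thesis using e0 by linarith
        next
          case False
          then have "\<delta> * V i u \<ge> V i u" using delta mult_right_mono_neg[of \<delta> 1 "V i u"] by simp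
          then show ?thesis using loi by simp
        qed
        then show "- (2 * e) \<le> S i u + \<delta> * V i u" using loi by simp
        have "\<delta> * V i u \<le> \<delta> * \<bar>V i u\<bar>" using delta by (simp add: mult_left_mono)
        also have "\<dots> \<le> \<bar>V i u\<bar>" using delta by (simp add: mult_left_le_one_le)
        finally have "\<delta> * V i u \<le> B" using absle[OF uu ci(3)] by linarith
        moreover have "S i u \<le> B" using absle[OF uu ci(3)] by (simp add: abs_le_iff)
        ultimately show "S i u + \<delta> * V i u \<le> 2 * B" by simp
      qed (use Ct_nn e0 B0 in auto)
      then have "Th u * (S i u + \<delta> * V i u) \<ge> - (4 * Ct * B * e)" by (simp add: algebra_simps)
      then have "lam i * (Th u * (S i u + \<delta> * V i u)) \<ge> - (lam i * (4 * Ct * B * e))"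
        by (rule cz_lb[OF lami])
      moreover have "aa * e \<ge> 0" using aa_pos e0 by simp
      moreover have "(4 * lam i * Ct * B) * e \<le> M * e"
        by (rule cfin) (use lamle Lmax_nn Ct_nn Mmax_nn B0 pars Ct4 lami LC0 in \<open>unfold M_def, linarith\<close>)
      ultimately show ?thesis by (simp add: algebra_simps)
    next
      case 4
      have Qi: "Q i u = -e" using xj unfolding ci x_def 4 by simp
      have "x' j u = \<beta> * I i u + (\<eta> + d) * e"
        unfolding ci x'_def 4 using Qi by (simp add: algebra_simps)
      moreover have "\<beta> * I i u \<ge> -(\<beta> * e)" using cz_lb[of \<beta> e "I i u"] pars loi by simp
      moreover have "(\<eta> + d) * e \<ge> 0" using pars bd e0 by simp
      moreover have "\<beta> * e \<le> M * e"
        by (rule cfin) (use lamle Lmax_nn Ct_nn Mmax_nn B0 pars Ct4 lami LC0 in \<open>unfold M_def, linarith\<close>)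
      ultimately show ?thesis by (simp add: algebra_simps)
    qed
  qed
  have P: "x j t1 \<ge> 0" if "j \<in> J" for j
    by (rule pos_invariant[of J x x' t1 1 M j, OF fin der ini bnd]) (use t1 that in auto)
  have "(0,k) \<in> J" "(1,k) \<in> J" "(2,k) \<in> J" "(3,k) \<in> J" using k unfolding J_def by auto
  note PP = P[OF this(1)] P[OF this(2)] P[OF this(3)] P[OF this(4)]
  have "x (0,k) t1 = S k t1" "x (1,k) t1 = V k t1" "x (2,k) t1 = I k t1" "x (3,k) t1 = Q k t1"
    unfolding x_def by simp_all
  then show ?thesis using PP by simp
qed


lemma Ntot: assumes u: "u \<ge> 0" and k: "k \<in> {1..n}"
  shows "S k u + V k u + I k u + Q k u = Nk k"
proof -
  define h where "h u = exp (d*u) * (S k u + V k u + I k u + Q k u - Nk k)" for u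
  have "(h has_real_derivative 0) (at u within {0..})" if u: "u \<in> {0..}" for u
  proof -
    have u': "u \<ge> 0" using u by simp
    show ?thesis unfolding h_def
      by (rule derivative_eq_intros dS[OF k u'] dV[OF k u'] dI[OF k u'] dQ[OF k u'] | simp)+
        (simp add: Lk_eq[OF k] aa_def algebra_simps)
  qed
  then obtain c where c: "\<forall>x\<in>{0..}. h x = c" using has_field_derivative_zero_constant[of "{0..}" h] by auto
  have "h 0 = 0" unfolding h_def Nk_def using init k by simp
  then have "h u = 0" using c u by force
  then show ?thesis unfolding h_def by simp
qed

lemma bnds: assumes u: "u \<ge> 0" and k: "k \<in> {1..n}"
  shows "0 \<le> S k u" "S k u \<le> Nk k" "0 \<le> V k u" "V k u \<le> Nk k" "0 \<le> I k u" "I k u \<le> Nk k" "0 \<le> Q k u"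
  using nonneg[OF u k] Ntot[OF u k] by linarith+

definition "G t = (\<Sum>k=1..n. w k * (S k t + \<delta> * V k t))"

lemma dTh: assumes u: "u \<ge> 0" shows "(Th has_real_derivative Th u * (G u - aa)) (at u within {0..})"
proof -
  define F where "F = (\<lambda>t. (1 / kb) * (\<Sum>i=1..n. phi i * p i * I i t))"
  have ThF: "Theta n p phi I = F" unfolding F_def Theta_def kb_def by (rule ext) simp
  have D: "(F has_real_derivative
     (1 / kb) * (\<Sum>i=1..n. phi i * p i * (lam i * S i u * Th u + \<delta> * lam i * V i u * Th u - aa * I i u)))
     (at u within {0..})"
    unfolding F_def by (intro DERIV_cmult DERIV_sum) (use dI u in auto)
  have s1: "(\<Sum>i=1..n. phi i * p i * (lam i * S i u * Th u + \<delta> * lam i * V i u * Th u - aa * I i u))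
      = (\<Sum>i=1..n. Th u * (phi i * p i * lam i * (S i u + \<delta> * V i u)) - aa * (phi i * p i * I i u))"
    by (rule sum.cong) (auto simp: algebra_simps)
  have s2: "(1 / kb) * (\<Sum>i=1..n. Th u * (phi i * p i * lam i * (S i u + \<delta> * V i u)) - aa * (phi i * p i * I i u))
      = Th u * (G u - aa)"
  proof -
    have g: "G u = (1/kb) * (\<Sum>i=1..n. phi i * p i * lam i * (S i u + \<delta> * V i u))"
      unfolding G_def w_def sum_distrib_left by (rule sum.cong) (auto simp: field_simps)
    have t: "Th u = (1/kb) * (\<Sum>i=1..n. phi i * p i * I i u)"
      unfolding Theta_def kb_def ..
    have "(1 / kb) * (\<Sum>i=1..n. Th u * (phi i * p i * lam i * (S i u + \<delta> * V i u)) - aa * (phi i * p i * I i u))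
       = Th u * ((1/kb) * (\<Sum>i=1..n. phi i * p i * lam i * (S i u + \<delta> * V i u))) - aa * ((1/kb) * (\<Sum>i=1..n. phi i * p i * I i u))"
      unfolding sum_subtractf sum_distrib_left[symmetric] by (simp add: algebra_simps)
    also have "\<dots> = Th u * (G u - aa)" unfolding g[symmetric] t[symmetric] by (simp add: algebra_simps)
    finally show ?thesis .
  qed
  have "(F has_real_derivative Th u * (G u - aa)) (at u within {0..})"
    using D unfolding s1 s2 .
  then show ?thesis unfolding ThF[symmetric] .
qed


lemma phi_nn: "k \<in> {1..n} \<Longrightarrow> phi k \<ge> 0" using phi_pos by (simp add: less_imp_le)
lemma p_nn: "k \<in> {1..n} \<Longrightarrow> p k \<ge> 0" using p_pos by (simp add: less_imp_le)
lemma w_nn: "k \<in> {1..n} \<Longrightarrow> w k \<ge> 0" using w_pos by (simp add: less_imp_le)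
lemma c1_nn: "k \<in> {1..n} \<Longrightarrow> c1 k \<ge> 0" using c1_pos by (simp add: less_imp_le)

lemma Th_nn: assumes u: "u \<ge> 0" shows "Th u \<ge> 0"
  unfolding Theta_def kb_def[symmetric] using kb_pos phi_nn p_nn bnds(5)[OF u]
  by (intro mult_nonneg_nonneg sum_nonneg) (auto intro!: mult_nonneg_nonneg)

lemma G_nn: assumes u: "u \<ge> 0" shows "G u \<ge> 0"
  unfolding G_def using w_nn bnds(1,3)[OF u] delta
  by (intro sum_nonneg) (auto intro!: mult_nonneg_nonneg add_nonneg_nonneg)

lemma Th0: "Th 0 > 0"
proof -
  obtain k where k: "k \<in> {1..n}" "p k * I k 0 > 0"
  proof (rule ccontr)
    assume "\<not> thesis"
    then have "\<forall>k\<in>{1..n}. p k * I k 0 \<le> 0" using that by force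
    then have "(\<Sum>k=1..n. p k * I k 0) \<le> 0" by (intro sum_nonpos) auto
    then show False using I0 by simp
  qed
  have "0 < (\<Sum>i=1..n. phi i * p i * I i 0)"
  proof (rule sum_pos2[of "{1..n}" k])
    show "0 < phi k * p k * I k 0" using phi_pos k by (simp add: mult.assoc)
    show "\<And>i. i \<in> {1..n} \<Longrightarrow> 0 \<le> phi i * p i * I i 0"
      using phi_nn p_nn bnds(5)[of 0] by (auto intro!: mult_nonneg_nonneg)
  qed (use k in auto)
  then show ?thesis unfolding Theta_def kb_def[symmetric] using kb_pos by simp
qed

lemma Th_pos: assumes u: "u \<ge> 0" shows "Th u > 0"
proof -
  have hd: "((\<lambda>v. exp (aa * v) * Th v) has_real_derivative exp (aa * v) * (Th v * G v)) (at v within {0..})"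
    if v: "v \<ge> 0" for v
    by (rule derivative_eq_intros dTh[OF v] | simp add: algebra_simps)+
  have "exp (aa * 0) * Th 0 \<le> exp (aa * u) * Th u"
    by (rule mono_deriv[OF hd]) (use u Th_nn G_nn in \<open>auto intro!: mult_nonneg_nonneg\<close>)
  then have "exp (aa * u) * Th u > 0" using Th0 by simp
  then show ?thesis by (simp add: zero_less_mult_iff)
qed

lemma Th_le: assumes u: "u \<ge> 0" shows "Th u \<le> Tm"
proof -
  have "(\<Sum>i=1..n. phi i * p i * I i u) \<le> (\<Sum>i=1..n. phi i * p i * Nk i)"
    using phi_nn p_nn bnds(6)[OF u] by (intro sum_mono mult_left_mono) (auto intro!: mult_nonneg_nonneg)
  then show ?thesis unfolding Theta_def Tm_def kb_def[symmetric] using kb_pos by (simp add: divide_right_mono)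
qed

definition "dSv k u = Lk k - lam k * S k u * Th u + \<gamma> * I k u + \<eta> * Q k u + \<omega> * V k u - (mu k + d) * S k u"
definition "dVv k u = mu k * S k u - \<delta> * lam k * V k u * Th u - (d + \<omega>) * V k u"
definition "P t = (\<Sum>k=1..n. w k * (c1 k * S k t + c2 k * V k t))"
definition "L t = ln (Th t) + P t"
definition "Ld u = (G u - aa) + (\<Sum>k=1..n. w k * (c1 k * dSv k u + c2 k * dVv k u))"

lemma P_bnd: assumes u: "u \<ge> 0" shows "0 \<le> P u" "P u \<le> Cp"
proof -
  show "0 \<le> P u" unfolding P_def using w_nn c1_nn c2_nn bnds(1,3)[OF u]
    by (intro sum_nonneg) (auto intro!: mult_nonneg_nonneg add_nonneg_nonneg)
  show "P u \<le> Cp" unfolding P_def Cp_def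
  proof (rule sum_mono)
    fix k assume k: "k \<in> {1..n}"
    have "c1 k * S k u \<le> c1 k * Nk k" using c1_pos[OF k] bnds(2)[OF u k] by simp
    moreover have "c2 k * V k u \<le> c2 k * Nk k" using c2_nn[OF k] bnds(4)[OF u k] by (simp add: mult_left_mono)
    ultimately have "c1 k * S k u + c2 k * V k u \<le> (c1 k + c2 k) * Nk k" by (simp add: algebra_simps)
    then show "w k * (c1 k * S k u + c2 k * V k u) \<le> w k * (c1 k + c2 k) * Nk k"
      using w_pos[OF k] by (simp add: mult.assoc)
  qed
qed

lemma dL: assumes u: "u \<ge> 0" shows "(L has_real_derivative Ld u) (at u within {0..})"
proof -
  have d1: "((\<lambda>t. ln (Th t)) has_real_derivative (Th u * (G u - aa)) / Th u) (at u within {0..})"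
    using dTh[OF u] Th_pos[OF u] by (auto intro!: derivative_eq_intros)
  have d2: "(P has_real_derivative (\<Sum>k=1..n. w k * (c1 k * dSv k u + c2 k * dVv k u))) (at u within {0..})"
    unfolding P_def dSv_def dVv_def
    by (intro DERIV_sum DERIV_cmult DERIV_add) (use dS dV u in auto)
  have "(L has_real_derivative (Th u * (G u - aa)) / Th u + (\<Sum>k=1..n. w k * (c1 k * dSv k u + c2 k * dVv k u)))
      (at u within {0..})"
    unfolding L_def using DERIV_add[OF d1 d2] by simp
  then show ?thesis unfolding Ld_def using Th_pos[OF u] by simp
qed

lemma Ld_lb: assumes u: "u \<ge> 0" shows "Ld u \<ge> AA - C1 * Th u"
proof -
  have per: "c1 k * dSv k u + c2 k * dVv k u + (S k u + \<delta> * V k u) \<ge> c1 k * Lk k - Th u * (lam k * (c1 k + c2 k) * Nk k)"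
    if k: "k \<in> {1..n}" for k
  proof -
    have "c1 k * dSv k u + c2 k * dVv k u + (S k u + \<delta> * V k u)
       = c1 k * Lk k + c1 k * (\<gamma> * I k u + \<eta> * Q k u) - lam k * Th u * (c1 k * S k u + c2 k * (\<delta> * V k u))
         + S k u * (1 + c2 k * mu k - c1 k * (mu k + d)) + V k u * (\<delta> + c1 k * \<omega> - c2 k * (d + \<omega>))"
      unfolding dSv_def dVv_def by (simp add: algebra_simps)
    also have "\<dots> = c1 k * Lk k + c1 k * (\<gamma> * I k u + \<eta> * Q k u) - lam k * Th u * (c1 k * S k u + c2 k * (\<delta> * V k u))"
      using e1[OF k] e2[OF k] by simp
    finally have eq: "c1 k * dSv k u + c2 k * dVv k u + (S k u + \<delta> * V k u) =
       c1 k * Lk k + c1 k * (\<gamma> * I k u + \<eta> * Q k u) - lam k * Th u * (c1 k * S k u + c2 k * (\<delta> * V k u))" .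
    have "c1 k * (\<gamma> * I k u + \<eta> * Q k u) \<ge> 0"
      using c1_pos[OF k] pars bnds(5,7)[OF u k] by simp
    moreover have "c1 k * S k u + c2 k * (\<delta> * V k u) \<le> (c1 k + c2 k) * Nk k"
    proof -
      have "c1 k * S k u \<le> c1 k * Nk k" using c1_pos[OF k] bnds(2)[OF u k] by simp
      moreover have "\<delta> * V k u \<le> Nk k"
        using delta bnds(3,4)[OF u k] mult_left_le_one_le[of "V k u" \<delta>] by linarith
      then have "c2 k * (\<delta> * V k u) \<le> c2 k * Nk k" using c2_nn[OF k] by (simp add: mult_left_mono)
      ultimately show ?thesis by (simp add: algebra_simps)
    qed
    then have "lam k * Th u * (c1 k * S k u + c2 k * (\<delta> * V k u)) \<le> lam k * Th u * ((c1 k + c2 k) * Nk k)"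
      using lam_nn[OF k] Th_nn[OF u] by (simp add: mult_left_mono)
    ultimately show ?thesis unfolding eq by (simp add: algebra_simps)
  qed
  have "Ld u = (\<Sum>k=1..n. w k * (c1 k * dSv k u + c2 k * dVv k u + (S k u + \<delta> * V k u))) - aa"
    unfolding Ld_def G_def by (simp add: sum.distrib[symmetric] algebra_simps)
  also have "\<dots> \<ge> (\<Sum>k=1..n. w k * (c1 k * Lk k - Th u * (lam k * (c1 k + c2 k) * Nk k))) - aa"
    using per w_pos by (intro diff_right_mono sum_mono mult_left_mono) (auto intro: less_imp_le)
  moreover have "(\<Sum>k=1..n. w k * (c1 k * Lk k - Th u * (lam k * (c1 k + c2 k) * Nk k))) - aa = AA - C1 * Th u"
    unfolding AA_def C1_def by (simp add: sum_subtractf sum_distrib_left algebra_simps)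
  ultimately show ?thesis by simp
qed


lemma C1thr: "C1 * thr \<le> AA / 2"
proof -
  have "C1 * thr = AA / 2 * (C1 / (C1 + 1))" unfolding thr_def using C1_nn by (simp add: field_simps)
  also have "\<dots> \<le> AA / 2 * 1" using C1_nn AA_pos by (intro mult_left_mono) auto
  finally show ?thesis by simp
qed

lemma Lmono_r: assumes s: "0 \<le> s" "s \<le> t" and low: "\<And>v. s < v \<Longrightarrow> v < t \<Longrightarrow> Th v \<le> thr"
  shows "L t \<ge> L s + (AA / 2) * (t - s)"
proof -
  have "L s - (AA / 2) * s \<le> L t - (AA / 2) * t"
  proof (rule mono_deriv[of "\<lambda>v. L v - AA / 2 * v" "\<lambda>v. Ld v - AA / 2" s t])
    show "((\<lambda>v. L v - AA / 2 * v) has_real_derivative Ld v - AA / 2) (at v within {0..})" if "v \<ge> 0" for v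
      using dL[OF that] by (auto intro!: derivative_eq_intros)
    show "Ld v - AA / 2 \<ge> 0" if "s < v" "v < t" for v
    proof -
      have "C1 * Th v \<le> C1 * thr" using low[OF that] C1_nn by (simp add: mult_left_mono)
      then show ?thesis using Ld_lb[of v] that s C1thr by linarith
    qed
  qed (use s in auto)
  moreover have "AA / 2 * (t - s) = AA / 2 * t - AA / 2 * s" by (simp add: right_diff_distrib)
  ultimately show ?thesis by linarith
qed

lemma Lmono_any: assumes s: "0 \<le> s" "s \<le> t"
  shows "L t \<ge> L s - C1 * Tm * (t - s)"
proof -
  have "L s + C1 * Tm * s \<le> L t + C1 * Tm * t"
  proof (rule mono_deriv[of "\<lambda>v. L v + C1 * Tm * v" "\<lambda>v. Ld v + C1 * Tm" s t])
    show "((\<lambda>v. L v + C1 * Tm * v) has_real_derivative Ld v + C1 * Tm) (at v within {0..})" if "v \<ge> 0" for v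
      using dL[OF that] by (auto intro!: derivative_eq_intros)
    show "Ld v + C1 * Tm \<ge> 0" if "s < v" "v < t" for v
    proof -
      have v: "v \<ge> 0" using that s by simp
      have "C1 * Th v \<le> C1 * Tm" using Th_le[OF v] C1_nn by (simp add: mult_left_mono)
      then show ?thesis using Ld_lb[OF v] AA_pos by linarith
    qed
  qed (use s in auto)
  moreover have "C1 * Tm * (t - s) = C1 * Tm * t - C1 * Tm * s" by (simp add: right_diff_distrib)
  ultimately show ?thesis by linarith
qed

lemma lnTh: assumes u: "u \<ge> 0" shows "L u - Cp \<le> ln (Th u)" "ln (Th u) \<le> L u"
  using P_bnd[OF u] unfolding L_def by auto

lemma exists_high: "\<exists>s0\<ge>0. Th s0 > thr"
proof (rule ccontr)
  assume "\<not> ?thesis"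
  then have lowall: "\<And>v. v \<ge> 0 \<Longrightarrow> Th v \<le> thr" by force
  define t where "t = 2 * (\<bar>ln thr\<bar> + \<bar>L 0\<bar> + Cp) / AA + 1"
  have t0: "t \<ge> 0" unfolding t_def using AA_pos Cp_nn by simp
  have "AA / 2 * t = (\<bar>ln thr\<bar> + \<bar>L 0\<bar> + Cp) + AA / 2" unfolding t_def using AA_pos by (simp add: field_simps)
  then have big: "AA / 2 * t > \<bar>ln thr\<bar> + \<bar>L 0\<bar> + Cp" using AA_pos by simp
  have "L t \<ge> L 0 + (AA / 2) * (t - 0)" by (rule Lmono_r) (use t0 lowall in auto)
  then have "ln (Th t) \<ge> L 0 + AA / 2 * t - Cp" using lnTh(1)[OF t0] by simp
  then have "ln (Th t) > ln thr" using big by linarith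
  moreover have "ln (Th t) \<le> ln thr" using lowall[OF t0] Th_pos[OF t0] thr_pos by simp
  ultimately show False by simp
qed

lemma eps0_le: "eps0 \<le> thr"
proof -
  have "C1 * Tm * TT + Cp \<ge> 0" using C1_nn Tm_nn TT_pos Cp_nn by simp
  then have "exp (-(C1 * Tm * TT + Cp)) \<le> 1" by simp
  then show ?thesis unfolding eps0_def using thr_pos by (simp add: mult_left_le_one_le)
qed

lemma stay: assumes s0: "s0 \<ge> 0" "Th s0 \<ge> thr" and t: "t \<ge> s0" shows "Th t \<ge> eps0"
proof (cases "Th t \<ge> thr")
  case True then show ?thesis using eps0_le by simp
next
  case False
  have t0: "t \<ge> 0" using s0 t by simp
  define Zs where "Zs = {s0..t} \<inter> Th -` {thr..}"
  have cTh: "continuous_on {s0..t} Th"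
    using continuous_on_subset[OF cont_from_deriv[OF dTh]] s0 by auto
  have "closed Zs" unfolding Zs_def by (rule continuous_closed_preimage[OF cTh]) auto
  have "s0 \<in> Zs" unfolding Zs_def using s0 t by auto
  then have ne: "Zs \<noteq> {}" by auto
  have bdd: "bdd_above Zs" unfolding Zs_def by (auto intro: bdd_aboveI[where M=t])
  define s where "s = Sup Zs"
  have sZ: "s \<in> Zs" unfolding s_def by (rule closed_contains_Sup[OF ne bdd \<open>closed Zs\<close>])
  have sup: "r \<le> s" if "r \<in> Zs" for r unfolding s_def using that bdd by (simp add: cSup_upper)
  have s: "s0 \<le> s" "s \<le> t" "Th s \<ge> thr" using sZ unfolding Zs_def by auto
  have s00: "s \<ge> 0" using s s0 by simp
  have lowafter: "Th v < thr" if "s < v" "v \<le> t" for v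
  proof (rule ccontr)
    assume "\<not> Th v < thr"
    then have "v \<in> Zs" unfolding Zs_def using that s by auto
    then show False using sup that by force
  qed
  have lnthr: "ln thr \<le> ln (Th s)" using s(3) thr_pos by simp
  have near: "t - s < TT"
  proof (rule ccontr)
    assume "\<not> t - s < TT"
    then have le: "s + TT \<le> t" by simp
    have "L (s + TT) \<ge> L s + (AA / 2) * (s + TT - s)"
      by (rule Lmono_r) (use s00 TT_pos le lowafter in \<open>auto intro: less_imp_le\<close>)
    then have "L (s + TT) \<ge> L s + (AA / 2) * TT" by simp
    moreover have "AA / 2 * TT = Cp + AA / 2" unfolding TT_def using AA_pos by (simp add: field_simps)
    moreover have "L (s + TT) - Cp \<le> ln (Th (s + TT))" using lnTh(1)[of "s+TT"] s00 TT_pos by simp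
    moreover have "ln (Th s) \<le> L s" using lnTh(2)[OF s00] .
    ultimately have "ln (Th (s + TT)) > ln thr" using lnthr AA_pos by linarith
    moreover have "Th (s + TT) > 0" using Th_pos[of "s + TT"] s00 TT_pos by simp
    ultimately have "Th (s + TT) > thr" using thr_pos by simp
    then have "Th (s + TT) < thr" using lowafter[of "s + TT"] TT_pos le by simp
    then show False using \<open>Th (s + TT) > thr\<close> by simp
  qed
  have "L t \<ge> L s - C1 * Tm * (t - s)" by (rule Lmono_any) (use s00 s in auto)
  moreover have "C1 * Tm * (t - s) \<le> C1 * Tm * TT" using near C1_nn Tm_nn
    by (intro mult_left_mono) auto
  moreover have "L t - Cp \<le> ln (Th t)" using lnTh(1)[OF t0] .
  moreover have "ln (Th s) \<le> L s" using lnTh(2)[OF s00] .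
  ultimately have "ln (Th t) \<ge> ln thr - (C1 * Tm * TT + Cp)" using lnthr by linarith
  then have "exp (ln thr - (C1 * Tm * TT + Cp)) \<le> exp (ln (Th t))" by simp
  moreover have "exp (ln thr - (C1 * Tm * TT + Cp)) = eps0"
    unfolding eps0_def using thr_pos by (simp add: exp_diff exp_minus divide_inverse exp_add)
  moreover have "exp (ln (Th t)) = Th t" using Th_pos[OF t0] by simp
  ultimately show ?thesis by simp
qed

lemma final: "ereal eps \<le> Liminf at_top (\<lambda>t. ereal (\<Sum>k=1..n. p k * I k t))"
proof (rule Liminf_bounded)
  obtain s0 where s0: "s0 \<ge> 0" "Th s0 > thr" using exists_high by blast
  have "eps \<le> (\<Sum>k=1..n. p k * I k t)" if t: "t \<ge> s0" for t
  proof -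
    have t0: "t \<ge> 0" using s0 t by simp
    have "kb * Th t = (\<Sum>i=1..n. phi i * p i * I i t)"
      unfolding Theta_def kb_def[symmetric] using kb_pos by simp
    also have "\<dots> \<le> (\<Sum>i=1..n. Fs * (p i * I i t))"
    proof (rule sum_mono)
      fix i assume i: "i \<in> {1..n}"
      have "phi i \<le> Fs" unfolding Fs_def using i phi_nn by (intro member_le_sum) auto
      moreover have "p i * I i t \<ge> 0" using p_nn[OF i] bnds(5)[OF t0 i] by simp
      ultimately show "phi i * p i * I i t \<le> Fs * (p i * I i t)"
        by (simp add: mult.assoc mult_right_mono)
    qed
    also have "\<dots> = Fs * (\<Sum>i=1..n. p i * I i t)" by (simp add: sum_distrib_left)
    finally have "kb * Th t \<le> Fs * (\<Sum>i=1..n. p i * I i t)" .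
    moreover have "kb * eps0 \<le> kb * Th t" using stay[OF s0(1) _ t] s0(2) kb_pos by simp
    ultimately have "kb * eps0 \<le> Fs * (\<Sum>i=1..n. p i * I i t)" by linarith
    then show ?thesis unfolding eps_def using Fs_pos by (simp add: field_simps)
  qed
  then show "\<forall>\<^sub>F t in at_top. ereal eps \<le> ereal (\<Sum>k=1..n. p k * I k t)"
    unfolding eventually_at_top_linorder by auto
qed

end


theorem theorem4p9:
  fixes n :: nat and p lam phi mu :: "nat \<Rightarrow> real"
    and b d Phi \<beta> \<gamma> \<eta> \<omega> \<delta> :: real
  assumes n: "n \<ge> 1"
    and p_pos: "\<forall>k\<in>{1..n}. p k > 0"
    and p_sum: "(\<Sum>k=1..n. p k) = 1"
    and bd: "b > d" "d > 0"
    and Phi_pos: "Phi > 0"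
    and Phi_eq: "Phi = (1 / kmean n p) * (\<Sum>i=1..n. real i * p i * b * Phi / (d + b * real i * Phi))"
    and lam_pos: "\<forall>k\<in>{1..n}. lam k > 0"
    and phi_pos: "\<forall>k\<in>{1..n}. phi k > 0"
    and mu_pos: "\<forall>k\<in>{1..n}. mu k > 0"
    and pars: "\<beta> > 0" "\<gamma> > 0" "\<eta> > 0" "\<omega> > 0"
    and delta: "0 \<le> \<delta>" "\<delta> \<le> 1"
    and R0: "R0 n p b d Phi lam phi mu \<beta> \<gamma> \<omega> \<delta> > 1"
  shows "\<exists>\<epsilon>>0. \<forall>S V I Q.
           SVIQS_solution n p b d Phi lam phi mu \<beta> \<gamma> \<eta> \<omega> \<delta> S V I Q \<and>
           (\<forall>k\<in>{1..n}. S k 0 \<ge> 0 \<and> V k 0 \<ge> 0 \<and> I k 0 \<ge> 0 \<and> Q k 0 \<ge> 0 \<and>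
               S k 0 + V k 0 + I k 0 + Q k 0 = Nstar b d Phi k) \<and>
           (\<Sum>k=1..n. p k * I k 0) > 0
           \<longrightarrow> ereal \<epsilon> \<le> Liminf at_top (\<lambda>t. ereal (\<Sum>k=1..n. p k * I k t))"
proof -
  interpret svp n p lam phi mu b d Phi \<beta> \<gamma> \<eta> \<omega> \<delta>
    by unfold_locales (use n p_pos bd Phi_pos lam_pos phi_pos mu_pos pars delta R0 in auto)
  show ?thesis
  proof (intro exI[of _ eps] conjI allI impI)
    show "eps > 0" by (rule eps_pos)
    fix S V I Q
    assume H: "SVIQS_solution n p b d Phi lam phi mu \<beta> \<gamma> \<eta> \<omega> \<delta> S V I Q \<and>
           (\<forall>k\<in>{1..n}. S k 0 \<ge> 0 \<and> V k 0 \<ge> 0 \<and> I k 0 \<ge> 0 \<and> Q k 0 \<ge> 0 \<and>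
               S k 0 + V k 0 + I k 0 + Q k 0 = Nstar b d Phi k) \<and>
           (\<Sum>k=1..n. p k * I k 0) > 0"
    interpret svs n p lam phi mu b d Phi \<beta> \<gamma> \<eta> \<omega> \<delta> S V I Q
      by unfold_locales (use H in auto)
    show "ereal eps \<le> Liminf at_top (\<lambda>t. ereal (\<Sum>k=1..n. p k * I k t))" by (rule final)
  qed
qed

end
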